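(* Let $p$ be an odd prime and let $R$ be a local nearring whose additive group is $G_1=\langle a\rangle+\langle b\rangle+\langle c\rangle$ with $ap=bp=cp=0$, $a+b=b+a+c$, $c$ central, where $a$ is the identity element of $R$, $c=-a-b+a+b$, and the subgroup $L$ of non-invertible elements equals $\langle b\rangle+\langle c\rangle$. Write elements as $x=ax_1+bx_2+cx_3$ ($0\le x_i<p$) and define $\alpha,\beta,\gamma\colon R\to\mathbb Z_p$ by $xb=a\alpha(x)+b\beta(x)+c\gamma(x)$. Then for $x,y\in R$, $$x\cdot y=ax_1y_1+b(x_2y_1+\beta(x)y_2)+c\Big(-x_1x_2\tbinom{y_1}{2}+x_3y_1+\gamma(x)y_2+x_1\beta(x)y_3\Big),$$ and moreover: (0) $\alpha(0)\equiv\beta(0)\equiv\gamma(0)\equiv0\pmod p$ if and only if $R$ is zero-symmetric; (1) $\alpha(x)\equiv 0\pmod p$ for all $x$; (2) if $\beta(x)\equiv0\pmod p$ then $x_1\equiv0\pmod p$; (3) $\beta(xy)\equiv\beta(x)\beta(y)\pmod p$; (4) $\gamma(xy)\equiv\gamma(x)\beta(y)+x_1\beta(x)\gamma(y)\pmod p$.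
   Context: A (left) nearring is a set $R$ with operations $+,\cdot$ such that $(R,+)$ is a group with neutral element $0$, $(R,\cdot)$ is a semigroup, and $x(y+z)=xy+xz$ for all $x,y,z$. A nearring with identity (i.e. $(R,\cdot)$ a monoid) is local if the set $L$ of its non-invertible elements is a subgroup of $(R,+)$. $R$ is zero-symmetric if $0\cdot x=0$ for all $x$. Additive notation: $gk$ is $g$ added $k$ times. *)

theory Defs
  imports "HOL-Algebra.Group" "HOL-Number_Theory.Cong"
begin

text \<open>A (left) nearring: the additive group is given as an HOL-Algebra group A
(written multiplicatively there: the group operation of A is the nearring addition,
its unit is the nearring zero), and m is the nearring multiplication.\<close>

definition nearring :: "('r, 'z) monoid_scheme \<Rightarrow> ('r \<Rightarrow> 'r \<Rightarrow> 'r) \<Rightarrow> bool" where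
  "nearring A m \<longleftrightarrow> group A
     \<and> (\<forall>x\<in>carrier A. \<forall>y\<in>carrier A. m x y \<in> carrier A)
     \<and> (\<forall>x\<in>carrier A. \<forall>y\<in>carrier A. \<forall>z\<in>carrier A. m (m x y) z = m x (m y z))
     \<and> (\<forall>x\<in>carrier A. \<forall>y\<in>carrier A. \<forall>z\<in>carrier A.
          m x (y \<otimes>\<^bsub>A\<^esub> z) = m x y \<otimes>\<^bsub>A\<^esub> m x z)"

definition is_mult_identity :: "('r, 'z) monoid_scheme \<Rightarrow> ('r \<Rightarrow> 'r \<Rightarrow> 'r) \<Rightarrow> 'r \<Rightarrow> bool" where
  "is_mult_identity A m e \<longleftrightarrow> e \<in> carrier A \<and> (\<forall>x\<in>carrier A. m e x = x \<and> m x e = x)"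

definition nonunits :: "('r, 'z) monoid_scheme \<Rightarrow> ('r \<Rightarrow> 'r \<Rightarrow> 'r) \<Rightarrow> 'r \<Rightarrow> 'r set" where
  "nonunits A m e = {x \<in> carrier A. \<not> (\<exists>y\<in>carrier A. m x y = e \<and> m y x = e)}"

definition local_nearring :: "('r, 'z) monoid_scheme \<Rightarrow> ('r \<Rightarrow> 'r \<Rightarrow> 'r) \<Rightarrow> 'r \<Rightarrow> bool" where
  "local_nearring A m e \<longleftrightarrow> nearring A m \<and> is_mult_identity A m e
     \<and> subgroup (nonunits A m e) A"

definition zero_symmetric :: "('r, 'z) monoid_scheme \<Rightarrow> ('r \<Rightarrow> 'r \<Rightarrow> 'r) \<Rightarrow> bool" where
  "zero_symmetric A m \<longleftrightarrow> (\<forall>x\<in>carrier A. m \<one>\<^bsub>A\<^esub> x = \<one>\<^bsub>A\<^esub>)"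

definition coords :: "('r, 'z) monoid_scheme \<Rightarrow> 'r \<Rightarrow> 'r \<Rightarrow> 'r \<Rightarrow> int \<Rightarrow> 'r \<Rightarrow> int \<times> int \<times> int" where
  "coords A a b c p x = (THE (k1, k2, k3). 0 \<le> k1 \<and> k1 < p \<and> 0 \<le> k2 \<and> k2 < p \<and> 0 \<le> k3 \<and> k3 < p
      \<and> x = a [^]\<^bsub>A\<^esub> k1 \<otimes>\<^bsub>A\<^esub> b [^]\<^bsub>A\<^esub> k2 \<otimes>\<^bsub>A\<^esub> c [^]\<^bsub>A\<^esub> k3)"

definition coord1 where "coord1 A a b c p x = fst (coords A a b c p x)"
definition coord2 where "coord2 A a b c p x = fst (snd (coords A a b c p x))"
definition coord3 where "coord3 A a b c p x = snd (snd (coords A a b c p x))"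

end

theory Submission
  imports Defs
begin

locale H = group A for A :: "('r,'z) monoid_scheme" (structure) +
  fixes m :: "'r \<Rightarrow> 'r \<Rightarrow> 'r" and a b c :: 'r and p :: int
  assumes p1: "p > 1"
    and R: "local_nearring A m a"
    and abc: "a \<in> carrier A" "b \<in> carrier A" "c \<in> carrier A"
    and G1: "carrier A = {a [^] k1 \<otimes> b [^] k2 \<otimes> c [^] k3 | k1 k2 k3 :: int.
                 0 \<le> k1 \<and> k1 < p \<and> 0 \<le> k2 \<and> k2 < p \<and> 0 \<le> k3 \<and> k3 < p}"
    and uniq: "\<And>k1 k2 k3 l1 l2 l3 :: int.
                 0 \<le> k1 \<Longrightarrow> k1 < p \<Longrightarrow> 0 \<le> k2 \<Longrightarrow> k2 < p \<Longrightarrow> 0 \<le> k3 \<Longrightarrow> k3 < p \<Longrightarrow>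
                 0 \<le> l1 \<Longrightarrow> l1 < p \<Longrightarrow> 0 \<le> l2 \<Longrightarrow> l2 < p \<Longrightarrow> 0 \<le> l3 \<Longrightarrow> l3 < p \<Longrightarrow>
                 a [^] k1 \<otimes> b [^] k2 \<otimes> c [^] k3
                   = a [^] l1 \<otimes> b [^] l2 \<otimes> c [^] l3 \<Longrightarrow>
                 k1 = l1 \<and> k2 = l2 \<and> k3 = l3"
    and ord: "a [^] p = \<one>" "b [^] p = \<one>" "c [^] p = \<one>"
    and comm: "a \<otimes> b = b \<otimes> a \<otimes> c"
    and central: "\<forall>x\<in>carrier A. c \<otimes> x = x \<otimes> c"
    and c_def: "c = inv a \<otimes> inv b \<otimes> a \<otimes> b"
    and L: "nonunits A m a = {b [^] k2 \<otimes> c [^] k3 | k2 k3 :: int.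
                 0 \<le> k2 \<and> k2 < p \<and> 0 \<le> k3 \<and> k3 < p}"
begin

lemma per: assumes g: "g \<in> carrier A" and gp: "g [^] p = \<one>"
  shows "g [^] (i::int) = g [^] (i mod p)"
proof -
  have "g [^] i = g [^] (i mod p + p * (i div p))" by simp
  also have "\<dots> = g [^] (i mod p) \<otimes> (g [^] p) [^] (i div p)"
    using g by (simp only: int_pow_mult int_pow_pow)
  finally show ?thesis using gp g by simp
qed

lemma per': assumes g: "g \<in> carrier A" and gp: "g [^] p = \<one>" and "[i = j] (mod p)"
  shows "g [^] (i::int) = g [^] j"
  using per[OF g gp, of i] per[OF g gp, of j] assms(3) unfolding cong_def by simp

lemma cpow_central: assumes x: "x \<in> carrier A" shows "c [^] (k::int) \<otimes> x = x \<otimes> c [^] k"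
proof -
  have "c [^] k = c [^] nat (k mod p)"
    using per[OF abc(3) ord(3), of k] p1 by (simp add: pow_nat)
  then show ?thesis using group_commutes_pow[of c x "nat (k mod p)"] central x abc by simp
qed

lemma cpow_central2: assumes x: "x \<in> carrier A" and y: "y \<in> carrier A"
  shows "c [^] (k::int) \<otimes> (x \<otimes> y) = x \<otimes> (c [^] k \<otimes> y)"
  using cpow_central[OF x, of k] x y abc by (simp add: m_assoc[symmetric])

lemmas cmove = cpow_central[OF abc(1)] cpow_central[OF abc(2)]
  cpow_central[OF int_pow_closed[OF abc(1)]] cpow_central[OF int_pow_closed[OF abc(2)]]
  cpow_central2[OF abc(1)] cpow_central2[OF abc(2)]
  cpow_central2[OF int_pow_closed[OF abc(1)]] cpow_central2[OF int_pow_closed[OF abc(2)]]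

lemma ba: "b \<otimes> a = a \<otimes> b \<otimes> inv c"
  using abc comm by (simp add: m_assoc)

lemma b_an: "b \<otimes> a [^] (n::nat) = a [^] n \<otimes> b \<otimes> c [^] (- int n)"
proof (induction n)
  case 0 then show ?case using abc by simp
next
  case (Suc n)
  have "b \<otimes> a [^] Suc n = (b \<otimes> a [^] n) \<otimes> a" using abc by (simp add: m_assoc)
  also have "\<dots> = a [^] n \<otimes> b \<otimes> (c [^] (- int n) \<otimes> a)" using Suc abc by (simp add: m_assoc)
  also have "\<dots> = a [^] n \<otimes> (b \<otimes> a) \<otimes> c [^] (- int n)" using abc by (simp add: m_assoc cmove)
  also have "\<dots> = a [^] n \<otimes> a \<otimes> b \<otimes> (inv c \<otimes> c [^] (- int n))" using abc ba by (simp add: m_assoc)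
  also have "inv c \<otimes> c [^] (- int n) = c [^] (- int (Suc n))"
  proof -
    have "c [^] (- int (Suc n)) = c [^] ((-1) + (- int n))" by simp
    also have "\<dots> = inv c \<otimes> c [^] (- int n)" using abc by (simp only: int_pow_mult int_pow_neg int_pow_1)
    finally show ?thesis by simp
  qed
  finally show ?case using abc by (simp add: m_assoc)
qed

lemma bm_an: "b [^] (k::nat) \<otimes> a [^] (n::nat) = a [^] n \<otimes> b [^] k \<otimes> c [^] (- (int k * int n))"
proof (induction k)
  case 0 then show ?case using abc by simp
next
  case (Suc k)
  have "b [^] Suc k \<otimes> a [^] n = b [^] k \<otimes> (b \<otimes> a [^] n)" using abc by (simp add: m_assoc)
  also have "\<dots> = (b [^] k \<otimes> a [^] n) \<otimes> b \<otimes> c [^] (- int n)" using abc b_an by (simp add: m_assoc)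
  also have "\<dots> = a [^] n \<otimes> b [^] k \<otimes> (c [^] (- (int k * int n)) \<otimes> b) \<otimes> c [^] (- int n)"
    using Suc abc by (simp add: m_assoc)
  also have "\<dots> = a [^] n \<otimes> (b [^] k \<otimes> b) \<otimes> (c [^] (- (int k * int n)) \<otimes> c [^] (- int n))"
    using abc by (simp add: m_assoc cmove)
  also have "c [^] (- (int k * int n)) \<otimes> c [^] (- int n) = c [^] (- (int (Suc k) * int n))"
    using abc by (simp add: int_pow_mult[symmetric] algebra_simps)
  finally show ?case using abc by (simp add: m_assoc)
qed

lemma pow_mod_nat: assumes g: "g \<in> carrier A" and gp: "g [^] p = \<one>"
  shows "g [^] (i::int) = g [^] nat (i mod p)"
  using per[OF g gp, of i] p1 by (simp add: pow_nat)

lemma bj_ai: "b [^] (j::int) \<otimes> a [^] (i::int) = a [^] i \<otimes> b [^] j \<otimes> c [^] (- (j * i))"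
proof -
  have "[- (j * i) = - (int (nat (j mod p)) * int (nat (i mod p)))] (mod p)"
    unfolding cong_def
  proof -
    have "(j*i) mod p = ((j mod p)*(i mod p)) mod p" by (simp add: mod_mult_eq)
    then have "(-(j*i)) mod p = (-((j mod p)*(i mod p))) mod p" by (metis mod_minus_eq)
    then show "- (j * i) mod p = - (int (nat (j mod p)) * int (nat (i mod p))) mod p" using p1 by simp
  qed
  then have "c [^] (- (j * i)) = c [^] (- (int (nat (j mod p)) * int (nat (i mod p))))"
    using per'[OF abc(3) ord(3)] by blast
  then show ?thesis using bm_an pow_mod_nat[OF abc(1) ord(1), of i] pow_mod_nat[OF abc(2) ord(2), of j]
    by simp
qed

definition phi where "phi i j k = a [^] (i::int) \<otimes> b [^] (j::int) \<otimes> c [^] (k::int)"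

lemma phi_closed[simp]: "phi i j k \<in> carrier A"
  using abc by (simp add: phi_def)

lemma phi_c: "phi i j k \<otimes> c [^] (l::int) = phi i j (k + l)"
  using abc by (simp add: phi_def m_assoc int_pow_mult)

lemma phi_mult: "phi i j k \<otimes> phi i' j' k' = phi (i+i') (j+j') (k+k'-j*i')"
proof -
  have "phi i j k \<otimes> phi i' j' k' = a [^] i \<otimes> b [^] j \<otimes> (c [^] k \<otimes> (a [^] i' \<otimes> b [^] j' \<otimes> c [^] k'))"
    using abc by (simp add: phi_def m_assoc)
  also have "\<dots> = a [^] i \<otimes> (b [^] j \<otimes> a [^] i') \<otimes> b [^] j' \<otimes> c [^] k' \<otimes> c [^] k"
    using abc by (simp add: m_assoc cmove) (metis int_pow_mult add.commute)
  also have "\<dots> = a [^] i \<otimes> a [^] i' \<otimes> b [^] j \<otimes> (c [^] (- (j * i')) \<otimes> b [^] j') \<otimes> c [^] k' \<otimes> c [^] k"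
    using abc bj_ai by (simp add: m_assoc)
  also have "\<dots> = a [^] i \<otimes> a [^] i' \<otimes> (b [^] j \<otimes> b [^] j') \<otimes> (c [^] (- (j * i')) \<otimes> c [^] k' \<otimes> c [^] k)"
    using abc by (simp add: m_assoc cmove)
  also have "\<dots> = phi (i+i') (j+j') (k+k'-j*i')"
  proof -
    have e: "k+k'-j*i' = -(j*i') + k' + k" by simp
    show ?thesis unfolding phi_def e using abc by (simp only: int_pow_mult)
  qed
  finally show ?thesis .
qed

lemma phi_000: "phi 0 0 0 = \<one>"
  using abc by (simp add: phi_def)

lemma choose2_Suc: "Suc n choose 2 = (n choose 2) + n"
  by (simp add: numeral_2_eq_2)

lemma phi_pow: "phi i j k [^] (n::nat) = phi (int n * i) (int n * j) (int n * k - i*j*int (n choose 2))"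
proof (induction n)
  case 0 then show ?case by (simp add: phi_000 numeral_2_eq_2)
next
  case (Suc n)
  have "phi i j k [^] Suc n = phi i j k [^] n \<otimes> phi i j k" by simp
  also have "\<dots> = phi (int n * i + i) (int n * j + j) (int n * k - i*j*int (n choose 2) + k - int n * j * i)"
    by (simp add: Suc phi_mult)
  also have "\<dots> = phi (int (Suc n) * i) (int (Suc n) * j) (int (Suc n) * k - i*j*int (Suc n choose 2))"
    by (simp add: choose2_Suc algebra_simps)
  finally show ?case .
qed

lemma coords_unique:
  assumes "0 \<le> k1" "k1 < p" "0 \<le> k2" "k2 < p" "0 \<le> k3" "k3 < p" "x = phi k1 k2 k3"
  shows "coords A a b c p x = (k1, k2, k3)"
  unfolding coords_def
proof (rule the_equality)
  show "case (k1, k2, k3) of (k1, k2, k3) \<Rightarrow> 0 \<le> k1 \<and> k1 < p \<and> 0 \<le> k2 \<and> k2 < p \<and> 0 \<le> k3 \<and> k3 < p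
      \<and> x = a [^] k1 \<otimes> b [^] k2 \<otimes> c [^] k3"
    using assms by (simp add: phi_def)
next
  fix t assume "case t of (k1, k2, k3) \<Rightarrow> 0 \<le> k1 \<and> k1 < p \<and> 0 \<le> k2 \<and> k2 < p \<and> 0 \<le> k3 \<and> k3 < p
      \<and> x = a [^] k1 \<otimes> b [^] k2 \<otimes> c [^] k3"
  then show "t = (k1, k2, k3)"
    using assms uniq unfolding phi_def by (cases t) auto
qed

lemma coords_ex: assumes "x \<in> carrier A"
  shows "\<exists>k1 k2 k3. 0 \<le> k1 \<and> k1 < p \<and> 0 \<le> k2 \<and> k2 < p \<and> 0 \<le> k3 \<and> k3 < p \<and> x = phi k1 k2 k3"
  using assms G1 unfolding phi_def by blast

lemma phi_mod: "phi i j k = phi (i mod p) (j mod p) (k mod p)"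
  unfolding phi_def using per abc ord by metis

lemma coords_phi: "coords A a b c p (phi i j k) = (i mod p, j mod p, k mod p)"
  using coords_unique[OF _ _ _ _ _ _ phi_mod] p1 by simp

lemma coords_x: assumes "x \<in> carrier A"
  shows "x = phi (coord1 A a b c p x) (coord2 A a b c p x) (coord3 A a b c p x)
    \<and> 0 \<le> coord1 A a b c p x \<and> coord1 A a b c p x < p
    \<and> 0 \<le> coord2 A a b c p x \<and> coord2 A a b c p x < p
    \<and> 0 \<le> coord3 A a b c p x \<and> coord3 A a b c p x < p"
proof -
  obtain k1 k2 k3 where k: "0 \<le> k1 \<and> k1 < p \<and> 0 \<le> k2 \<and> k2 < p \<and> 0 \<le> k3 \<and> k3 < p \<and> x = phi k1 k2 k3"
    using coords_ex[OF assms] by blast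
  then have "coords A a b c p x = (k1, k2, k3)" using coords_unique by blast
  then show ?thesis using k unfolding coord1_def coord2_def coord3_def by simp
qed

lemma NR: "nearring A m" and ID: "is_mult_identity A m a" and SG: "subgroup (nonunits A m a) A"
  using R unfolding local_nearring_def by auto

lemma m_cl[simp]: "x \<in> carrier A \<Longrightarrow> y \<in> carrier A \<Longrightarrow> m x y \<in> carrier A"
  using NR unfolding nearring_def by blast
lemma m_as: "x \<in> carrier A \<Longrightarrow> y \<in> carrier A \<Longrightarrow> z \<in> carrier A \<Longrightarrow> m (m x y) z = m x (m y z)"
  using NR unfolding nearring_def by blast
lemma m_dist: "x \<in> carrier A \<Longrightarrow> y \<in> carrier A \<Longrightarrow> z \<in> carrier A \<Longrightarrow> m x (y \<otimes> z) = m x y \<otimes> m x z"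
  using NR unfolding nearring_def by blast
lemma m_idl[simp]: "x \<in> carrier A \<Longrightarrow> m a x = x" and m_idr[simp]: "x \<in> carrier A \<Longrightarrow> m x a = x"
  using ID unfolding is_mult_identity_def by auto

lemma m_one[simp]: assumes x: "x \<in> carrier A" shows "m x \<one> = \<one>"
proof -
  have "m x \<one> = m x \<one> \<otimes> m x \<one>" using m_dist[OF x, of \<one> \<one>] by simp
  then show ?thesis using x by simp
qed

lemma m_inv: assumes x: "x \<in> carrier A" and y: "y \<in> carrier A" shows "m x (inv y) = inv (m x y)"
proof -
  have "m x (inv y) \<otimes> m x y = \<one>" using m_dist[OF x, of "inv y" y] x y by simp
  then show ?thesis using inv_equality x y by simp
qed

lemma m_pow_nat: assumes x: "x \<in> carrier A" and y: "y \<in> carrier A" shows "m x (y [^] (n::nat)) = (m x y) [^] n"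
  by (induction n) (simp_all add: x y m_dist)

lemma m_pow_int: assumes x: "x \<in> carrier A" and y: "y \<in> carrier A" shows "m x (y [^] (i::int)) = (m x y) [^] i"
proof (cases "i < 0")
  case True
  then show ?thesis unfolding int_pow_def2[of A y] int_pow_def2[of A "m x y"]
    using m_pow_nat[OF x y] m_inv[OF x nat_pow_closed[OF y]] True by (simp del: pow_nat)
next
  case False
  then show ?thesis unfolding int_pow_def2[of A y] int_pow_def2[of A "m x y"]
    using m_pow_nat[OF x y] False by (simp del: pow_nat)
qed

lemma fin: "finite (carrier A)"
proof -
  have "carrier A \<subseteq> (\<lambda>(i,j,k). phi i j k) ` ({0..<p} \<times> {0..<p} \<times> {0..<p})"
    using G1 unfolding phi_def by force
  then show ?thesis by (rule finite_subset) simp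
qed

lemma b_nonunit: "b \<in> nonunits A m a"
proof -
  have "b = b [^] (1::int) \<otimes> c [^] (0::int)" using abc by simp
  then have "\<exists>k2 k3. b = b [^] (k2::int) \<otimes> c [^] (k3::int) \<and> 0 \<le> k2 \<and> k2 < p \<and> 0 \<le> k3 \<and> k3 < p"
    using p1 by (intro exI[of _ 1] exI[of _ 0]) simp
  then show ?thesis unfolding L by simp
qed

lemma nonunit_form: assumes "u \<in> nonunits A m a"
  shows "\<exists>j k. 0 \<le> j \<and> j < p \<and> 0 \<le> k \<and> k < p \<and> u = phi 0 j k"
  using assms abc unfolding L phi_def by auto

lemma mxb_nonunit: assumes x: "x \<in> carrier A" shows "m x b \<in> nonunits A m a"
proof (rule ccontr)
  assume "m x b \<notin> nonunits A m a"
  then obtain u where u: "u \<in> carrier A" "m (m x b) u = a" "m u (m x b) = a"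
    using x abc unfolding nonunits_def by auto
  define y where "y = m u x"
  have y: "y \<in> carrier A" "m y b = a" using u x abc m_as unfolding y_def by auto
  have inj: "inj_on (m b) (carrier A)"
  proof (rule inj_onI)
    fix z1 z2 assume z: "z1 \<in> carrier A" "z2 \<in> carrier A" "m b z1 = m b z2"
    have "z1 = m (m y b) z1" using y z by simp
    also have "\<dots> = m y (m b z1)" by (rule m_as[OF y(1) abc(2) z(1)])
    also have "\<dots> = m y (m b z2)" using z by simp
    also have "\<dots> = m (m y b) z2" by (rule m_as[OF y(1) abc(2) z(2), symmetric])
    also have "\<dots> = z2" using y z by simp
    finally show "z1 = z2" .
  qed
  have "m b ` carrier A = carrier A"
    using endo_inj_surj[OF fin _ inj] abc by (simp add: image_subset_iff)
  then obtain z where z: "z \<in> carrier A" "m b z = a" using abc by (metis imageE)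
  have "y = m y (m b z)" using z y by simp
  also have "\<dots> = z" using m_as y z abc by (metis m_idl)
  finally have "m z b = a" using y by simp
  then have "b \<notin> nonunits A m a" using z unfolding nonunits_def by auto
  then show False using b_nonunit by simp
qed

definition bet where "bet x = coord2 A a b c p (m x b)"
definition gam where "gam x = coord3 A a b c p (m x b)"

lemma xb: assumes x: "x \<in> carrier A"
  shows "coord1 A a b c p (m x b) = 0 \<and> m x b = phi 0 (bet x) (gam x)
    \<and> 0 \<le> bet x \<and> bet x < p \<and> 0 \<le> gam x \<and> gam x < p"
proof -
  obtain j k where jk: "0 \<le> j \<and> j < p \<and> 0 \<le> k \<and> k < p \<and> m x b = phi 0 j k"
    using nonunit_form[OF mxb_nonunit[OF x]] by blast
  then have "coords A a b c p (m x b) = (0, j, k)" using coords_unique p1 by simp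
  then show ?thesis using jk unfolding bet_def gam_def coord1_def coord2_def coord3_def by simp
qed

lemma comm_phi: "inv (phi i j k) \<otimes> inv (phi 0 s t) \<otimes> phi i j k \<otimes> phi 0 s t = c [^] (i * s)"
proof -
  define P where "P = phi i (j+s) (k+t)"
  have P1: "phi i j k \<otimes> phi 0 s t = P" unfolding P_def by (simp add: phi_mult)
  have P2: "phi 0 s t \<otimes> phi i j k = P \<otimes> c [^] (- (s * i))" unfolding P_def
    by (simp add: phi_mult phi_c algebra_simps)
  have "inv (phi i j k) \<otimes> inv (phi 0 s t) \<otimes> phi i j k \<otimes> phi 0 s t
      = inv (phi 0 s t \<otimes> phi i j k) \<otimes> (phi i j k \<otimes> phi 0 s t)"
    by (simp add: m_assoc inv_mult_group)
  also have "\<dots> = inv (c [^] (- (s * i))) \<otimes> (inv P \<otimes> P)"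
    unfolding P1 P2 using abc by (simp add: inv_mult_group P_def m_assoc)
  also have "\<dots> = c [^] (i * s)" using abc by (simp add: P_def int_pow_neg mult.commute)
  finally show ?thesis .
qed

lemma xc: assumes x: "x \<in> carrier A"
  shows "m x c = c [^] (coord1 A a b c p x * bet x)"
proof -
  have "m x c = inv x \<otimes> inv (m x b) \<otimes> x \<otimes> m x b"
    using x abc by (simp add: c_def m_dist m_inv)
  also have "\<dots> = c [^] (coord1 A a b c p x * bet x)"
    using coords_x[OF x] xb[OF x] comm_phi by metis
  finally show ?thesis .
qed

lemma phi0_pow: "phi 0 s t [^] (i::int) = phi 0 (s * i) (t * i)"
proof -
  have e: "phi 0 s t = b [^] s \<otimes> c [^] t" using abc by (simp add: phi_def)
  have "(b [^] s \<otimes> c [^] t) [^] i = (b [^] s) [^] i \<otimes> (c [^] t) [^] i"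
    using abc by (intro int_pow_mult_distrib) (simp_all add: cpow_central)
  then show ?thesis using abc e by (simp add: int_pow_pow phi_def)
qed

lemma mult_phi: assumes x: "x \<in> carrier A" and y1: "0 \<le> y1"
  shows "m x (phi y1 y2 y3) = phi (coord1 A a b c p x * y1) (coord2 A a b c p x * y1 + bet x * y2)
     (- coord1 A a b c p x * coord2 A a b c p x * int (nat y1 choose 2) + coord3 A a b c p x * y1
       + gam x * y2 + coord1 A a b c p x * bet x * y3)"
proof -
  define x1 where "x1 = coord1 A a b c p x"
  define x2 where "x2 = coord2 A a b c p x"
  define x3 where "x3 = coord3 A a b c p x"
  have xe: "x = phi x1 x2 x3" using coords_x[OF x] unfolding x1_def x2_def x3_def by simp
  have "m x (phi y1 y2 y3) = x [^] y1 \<otimes> m x b [^] y2 \<otimes> m x c [^] y3"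
    unfolding phi_def using x abc by (simp add: m_dist m_pow_int)
  also have "x [^] y1 = phi (int (nat y1) * x1) (int (nat y1) * x2) (int (nat y1) * x3 - x1*x2*int (nat y1 choose 2))"
    using y1 xe phi_pow pow_nat[OF y1, of A x, symmetric] by simp
  also have "m x b [^] y2 = phi 0 (bet x * y2) (gam x * y2)"
    using xb[OF x] phi0_pow by simp
  also have "m x c [^] y3 = c [^] (x1 * bet x * y3)"
    using xc[OF x] abc unfolding x1_def by (simp add: int_pow_pow)
  finally show ?thesis using y1 unfolding x1_def[symmetric] x2_def[symmetric] x3_def[symmetric]
    by (simp add: phi_mult phi_c algebra_simps)
qed

lemma range_cong0: "0 \<le> t \<Longrightarrow> t < p \<Longrightarrow> [t = 0] (mod p) \<Longrightarrow> t = 0"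
  unfolding cong_def by simp

lemma c_ne_one: "c \<noteq> \<one>"
proof
  assume h: "c = \<one>"
  have "c = phi 0 0 1" using abc by (simp add: phi_def)
  then have "coords A a b c p c = (0 mod p, 0 mod p, 1 mod p)" using coords_phi[of 0 0 1] by metis
  then have "coords A a b c p c = (0, 0, 1)" using p1 by simp
  moreover have "coords A a b c p \<one> = (0, 0, 0)" using coords_phi[of 0 0 0] phi_000 by simp
  ultimately show False using h by simp
qed

lemma beta0: assumes x: "x \<in> carrier A" and h: "[bet x = 0] (mod p)"
  shows "[coord1 A a b c p x = 0] (mod p)"
proof (rule ccontr)
  assume nz: "\<not> [coord1 A a b c p x = 0] (mod p)"
  have "bet x = 0" using xb[OF x] h range_cong0 by blast
  then have mc: "m x c = \<one>" using xc[OF x] by simp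
  have "x \<notin> nonunits A m a"
  proof
    assume "x \<in> nonunits A m a"
    then obtain j k where "0 \<le> j \<and> j < p \<and> 0 \<le> k \<and> k < p \<and> x = phi 0 j k"
      using nonunit_form by blast
    then have "coord1 A a b c p x = 0" using coords_unique p1 unfolding coord1_def by simp
    then show False using nz by simp
  qed
  then obtain y where y: "y \<in> carrier A" "m x y = a" "m y x = a"
    using x unfolding nonunits_def by auto
  have "c = m (m y x) c" using y abc by simp
  also have "\<dots> = m y (m x c)" using m_as y x abc by blast
  also have "\<dots> = \<one>" using mc y by simp
  finally show False using c_ne_one by simp
qed

lemma mxy_b: assumes x: "x \<in> carrier A" and y: "y \<in> carrier A"
  shows "m (m x y) b = phi 0 (bet x * bet y) (gam x * bet y + coord1 A a b c p x * bet x * gam y)"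
proof -
  have "m (m x y) b = m x (m y b)" using m_as x y abc by blast
  also have "\<dots> = m x (phi 0 (bet y) (gam y))" using xb[OF y] by simp
  also have "\<dots> = phi 0 (bet x * bet y) (gam x * bet y + coord1 A a b c p x * bet x * gam y)"
    using mult_phi[OF x, of 0] by (simp add: numeral_2_eq_2)
  finally show ?thesis .
qed

lemma bet_mult: assumes x: "x \<in> carrier A" and y: "y \<in> carrier A"
  shows "[bet (m x y) = bet x * bet y] (mod p)"
  using mxy_b[OF x y] coords_phi unfolding bet_def coord2_def cong_def by simp

lemma gam_mult: assumes x: "x \<in> carrier A" and y: "y \<in> carrier A"
  shows "[gam (m x y) = gam x * bet y + coord1 A a b c p x * bet x * gam y] (mod p)"
  using mxy_b[OF x y] coords_phi unfolding gam_def coord3_def cong_def by simp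

lemma coords_one: "coord1 A a b c p \<one> = 0" "coord2 A a b c p \<one> = 0" "coord3 A a b c p \<one> = 0"
  using coords_phi[of 0 0 0] phi_000 unfolding coord1_def coord2_def coord3_def by simp_all

lemma zs: "([coord1 A a b c p (m \<one> b) = 0] (mod p) \<and> [bet \<one> = 0] (mod p) \<and> [gam \<one> = 0] (mod p))
   \<longleftrightarrow> zero_symmetric A m"
proof
  assume h: "[coord1 A a b c p (m \<one> b) = 0] (mod p) \<and> [bet \<one> = 0] (mod p) \<and> [gam \<one> = 0] (mod p)"
  have bg: "bet \<one> = 0" "gam \<one> = 0" using xb[of \<one>] h range_cong0 by auto
  show "zero_symmetric A m" unfolding zero_symmetric_def
  proof
    fix y assume y: "y \<in> carrier A"
    have "m \<one> y = m \<one> (phi (coord1 A a b c p y) (coord2 A a b c p y) (coord3 A a b c p y))"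
      using coords_x[OF y] by simp
    also have "\<dots> = \<one>"
    proof -
      have "0 \<le> coord1 A a b c p y" using coords_x[OF y] by simp
      from mult_phi[OF one_closed this, of "coord2 A a b c p y" "coord3 A a b c p y"]
      show ?thesis using coords_one bg phi_000 by simp
    qed
    finally show "m \<one> y = \<one>" .
  qed
next
  assume "zero_symmetric A m"
  then have "m \<one> b = \<one>" using abc unfolding zero_symmetric_def by blast
  then show "[coord1 A a b c p (m \<one> b) = 0] (mod p) \<and> [bet \<one> = 0] (mod p) \<and> [gam \<one> = 0] (mod p)"
    unfolding bet_def gam_def using coords_one by simp
qed

end

theorem lemma6:
  fixes A :: "('r, 'z) monoid_scheme" and m :: "'r \<Rightarrow> 'r \<Rightarrow> 'r"
    and a b c :: 'r and p :: int
  assumes p: "prime p" "odd p"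
    and R: "local_nearring A m a"
    and abc: "a \<in> carrier A" "b \<in> carrier A" "c \<in> carrier A"
    and G1: "carrier A = {a [^]\<^bsub>A\<^esub> k1 \<otimes>\<^bsub>A\<^esub> b [^]\<^bsub>A\<^esub> k2 \<otimes>\<^bsub>A\<^esub> c [^]\<^bsub>A\<^esub> k3 | k1 k2 k3 :: int.
                 0 \<le> k1 \<and> k1 < p \<and> 0 \<le> k2 \<and> k2 < p \<and> 0 \<le> k3 \<and> k3 < p}"
    and uniq: "\<And>k1 k2 k3 l1 l2 l3 :: int.
                 0 \<le> k1 \<Longrightarrow> k1 < p \<Longrightarrow> 0 \<le> k2 \<Longrightarrow> k2 < p \<Longrightarrow> 0 \<le> k3 \<Longrightarrow> k3 < p \<Longrightarrow>
                 0 \<le> l1 \<Longrightarrow> l1 < p \<Longrightarrow> 0 \<le> l2 \<Longrightarrow> l2 < p \<Longrightarrow> 0 \<le> l3 \<Longrightarrow> l3 < p \<Longrightarrow>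
                 a [^]\<^bsub>A\<^esub> k1 \<otimes>\<^bsub>A\<^esub> b [^]\<^bsub>A\<^esub> k2 \<otimes>\<^bsub>A\<^esub> c [^]\<^bsub>A\<^esub> k3
                   = a [^]\<^bsub>A\<^esub> l1 \<otimes>\<^bsub>A\<^esub> b [^]\<^bsub>A\<^esub> l2 \<otimes>\<^bsub>A\<^esub> c [^]\<^bsub>A\<^esub> l3 \<Longrightarrow>
                 k1 = l1 \<and> k2 = l2 \<and> k3 = l3"
    and ord: "a [^]\<^bsub>A\<^esub> p = \<one>\<^bsub>A\<^esub>" "b [^]\<^bsub>A\<^esub> p = \<one>\<^bsub>A\<^esub>" "c [^]\<^bsub>A\<^esub> p = \<one>\<^bsub>A\<^esub>"
    and comm: "a \<otimes>\<^bsub>A\<^esub> b = b \<otimes>\<^bsub>A\<^esub> a \<otimes>\<^bsub>A\<^esub> c"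
    and central: "\<forall>x\<in>carrier A. c \<otimes>\<^bsub>A\<^esub> x = x \<otimes>\<^bsub>A\<^esub> c"
    and c_def: "c = inv\<^bsub>A\<^esub> a \<otimes>\<^bsub>A\<^esub> inv\<^bsub>A\<^esub> b \<otimes>\<^bsub>A\<^esub> a \<otimes>\<^bsub>A\<^esub> b"
    and L: "nonunits A m a = {b [^]\<^bsub>A\<^esub> k2 \<otimes>\<^bsub>A\<^esub> c [^]\<^bsub>A\<^esub> k3 | k2 k3 :: int.
                 0 \<le> k2 \<and> k2 < p \<and> 0 \<le> k3 \<and> k3 < p}"
  defines "x1 \<equiv> coord1 A a b c p" and "x2 \<equiv> coord2 A a b c p" and "x3 \<equiv> coord3 A a b c p"
  defines "\<alpha> \<equiv> \<lambda>x. coord1 A a b c p (m x b)"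
    and "\<beta> \<equiv> \<lambda>x. coord2 A a b c p (m x b)"
    and "\<gamma> \<equiv> \<lambda>x. coord3 A a b c p (m x b)"
  shows "(\<forall>x\<in>carrier A. \<forall>y\<in>carrier A.
            m x y = a [^]\<^bsub>A\<^esub> (x1 x * x1 y)
                    \<otimes>\<^bsub>A\<^esub> b [^]\<^bsub>A\<^esub> (x2 x * x1 y + \<beta> x * x2 y)
                    \<otimes>\<^bsub>A\<^esub> c [^]\<^bsub>A\<^esub> (- x1 x * x2 x * int (nat (x1 y) choose 2) + x3 x * x1 y
                                        + \<gamma> x * x2 y + x1 x * \<beta> x * x3 y))
       \<and> (([\<alpha> \<one>\<^bsub>A\<^esub> = 0] (mod p) \<and> [\<beta> \<one>\<^bsub>A\<^esub> = 0] (mod p) \<and> [\<gamma> \<one>\<^bsub>A\<^esub> = 0] (mod p))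
            \<longleftrightarrow> zero_symmetric A m)
       \<and> (\<forall>x\<in>carrier A. [\<alpha> x = 0] (mod p))
       \<and> (\<forall>x\<in>carrier A. [\<beta> x = 0] (mod p) \<longrightarrow> [x1 x = 0] (mod p))
       \<and> (\<forall>x\<in>carrier A. \<forall>y\<in>carrier A. [\<beta> (m x y) = \<beta> x * \<beta> y] (mod p))
       \<and> (\<forall>x\<in>carrier A. \<forall>y\<in>carrier A.
            [\<gamma> (m x y) = \<gamma> x * \<beta> y + x1 x * \<beta> x * \<gamma> y] (mod p))"
proof -
  have grp: "group A" using R unfolding local_nearring_def nearring_def by blast
  have p1: "p > 1" using p prime_gt_1_int by blast
  interpret H A m a b c p
    by (rule H.intro[OF grp], unfold_locales) (use p1 R abc G1 uniq ord comm central c_def L in auto)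
  have bdef: "\<beta> = H.bet A m a b c p" unfolding \<beta>_def H.bet_def[OF H_axioms] by simp
  have gdef: "\<gamma> = H.gam A m a b c p" unfolding \<gamma>_def H.gam_def[OF H_axioms] by simp
  have F: "\<forall>x\<in>carrier A. \<forall>y\<in>carrier A.
            m x y = a [^]\<^bsub>A\<^esub> (x1 x * x1 y)
                    \<otimes>\<^bsub>A\<^esub> b [^]\<^bsub>A\<^esub> (x2 x * x1 y + \<beta> x * x2 y)
                    \<otimes>\<^bsub>A\<^esub> c [^]\<^bsub>A\<^esub> (- x1 x * x2 x * int (nat (x1 y) choose 2) + x3 x * x1 y
                                        + \<gamma> x * x2 y + x1 x * \<beta> x * x3 y)"
  proof (intro ballI)
    fix x y assume x: "x \<in> carrier A" and y: "y \<in> carrier A"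
    have ye: "y = phi (x1 y) (x2 y) (x3 y)" and y1: "0 \<le> x1 y"
      using coords_x[OF y] unfolding x1_def x2_def x3_def by auto
    have "m x y = m x (phi (x1 y) (x2 y) (x3 y))" using ye by simp
    also note mult_phi[OF x y1]
    finally show "m x y = a [^]\<^bsub>A\<^esub> (x1 x * x1 y)
                    \<otimes>\<^bsub>A\<^esub> b [^]\<^bsub>A\<^esub> (x2 x * x1 y + \<beta> x * x2 y)
                    \<otimes>\<^bsub>A\<^esub> c [^]\<^bsub>A\<^esub> (- x1 x * x2 x * int (nat (x1 y) choose 2) + x3 x * x1 y
                                        + \<gamma> x * x2 y + x1 x * \<beta> x * x3 y)"
      unfolding bdef gdef phi_def x1_def x2_def x3_def by (simp add: algebra_simps)
  qed
  show ?thesis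
  proof (intro conjI)
    show "\<forall>x\<in>carrier A. \<forall>y\<in>carrier A.
            m x y = a [^]\<^bsub>A\<^esub> (x1 x * x1 y)
                    \<otimes>\<^bsub>A\<^esub> b [^]\<^bsub>A\<^esub> (x2 x * x1 y + \<beta> x * x2 y)
                    \<otimes>\<^bsub>A\<^esub> c [^]\<^bsub>A\<^esub> (- x1 x * x2 x * int (nat (x1 y) choose 2) + x3 x * x1 y
                                        + \<gamma> x * x2 y + x1 x * \<beta> x * x3 y)" by (rule F)
    show "([\<alpha> \<one>\<^bsub>A\<^esub> = 0] (mod p) \<and> [\<beta> \<one>\<^bsub>A\<^esub> = 0] (mod p) \<and> [\<gamma> \<one>\<^bsub>A\<^esub> = 0] (mod p))
            \<longleftrightarrow> zero_symmetric A m"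
      unfolding \<alpha>_def bdef gdef using zs by simp
    show "\<forall>x\<in>carrier A. [\<alpha> x = 0] (mod p)"
      unfolding \<alpha>_def
    proof (intro ballI)
      fix x assume "x \<in> carrier A"
      then have "coord1 A a b c p (m x b) = 0" using xb by blast
      then show "[coord1 A a b c p (m x b) = 0] (mod p)" by simp
    qed
    show "\<forall>x\<in>carrier A. [\<beta> x = 0] (mod p) \<longrightarrow> [x1 x = 0] (mod p)"
      unfolding bdef x1_def using beta0 by blast
    show "\<forall>x\<in>carrier A. \<forall>y\<in>carrier A. [\<beta> (m x y) = \<beta> x * \<beta> y] (mod p)"
      unfolding bdef using bet_mult by blast
    show "\<forall>x\<in>carrier A. \<forall>y\<in>carrier A.
            [\<gamma> (m x y) = \<gamma> x * \<beta> y + x1 x * \<beta> x * \<gamma> y] (mod p)"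
      unfolding bdef gdef x1_def using gam_mult by blast
  qed
qed

end
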